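(* The $\mathbf k$-linear map $\varphi:\mathrm{WCQSym}\to\mathrm{QSym}$, defined by $\varphi(M_\alpha)=(-1)^{\ell_\varepsilon(\alpha)}M_{\bar\alpha}$ if $\alpha\in\mathcal C_N$ and $\varphi(M_\alpha)=0$ if $\alpha\in\mathcal C_\varepsilon$, is a coalgebra homomorphism, i.e. $\Delta_{\mathbb N}\circ\varphi=(\varphi\otimes\varphi)\circ\Delta_W$ and $\epsilon_{\mathbb N}\circ\varphi=\epsilon_W$.
   Context: $\tilde{\mathbb N}=\mathbb N\cup\{\varepsilon\}$ with $0+\varepsilon=\varepsilon+\varepsilon=\varepsilon$ and $n+\varepsilon=n$ for integers $n\ge1$. $\mathbf{k}$ is a commutative ring containing $\mathbb Q$; $\mathbf{k}[[X]]_{\tilde{\mathbb N}}$, $X=\{x_1<x_2<\cdots\}$, is the algebra of possibly infinite linear combinations of formal monomials $\prod x_i^{f(x_i)}$ with $f$ finitely supported $\tilde{\mathbb N}$-valued. An $\tilde{\mathbb N}$-composition is a finite (possibly empty) sequence of elements of $\{\varepsilon,1,2,\dots\}$; $M_{(\alpha_1,\dots,\alpha_k)}=\sum_{1\le i_1<\cdots<i_k}x_{i_1}^{\alpha_1}\cdots x_{i_k}^{\alpha_k}$, $M_\emptyset=1$. $\mathrm{WCQSym}$ is the free $\mathbf k$-module spanned by all $M_\alpha$, with coproduct $\Delta_W(M_{(\alpha_1,\dots,\alpha_k)})=\sum_{i=0}^kM_{(\alpha_1,\dots,\alpha_i)}\otimes M_{(\alpha_{i+1},\dots,\alpha_k)}$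 and counit $\epsilon_W(M_\alpha)=\delta_{\alpha,\emptyset}$; $\mathrm{QSym}$ is the span of the $M_\alpha$ with all entries positive integers, with coproduct $\Delta_{\mathbb N}$ and counit $\epsilon_{\mathbb N}$ given by the same formulas. $\ell_\varepsilon(\alpha)$ is the number of entries equal to $\varepsilon$, $\bar\alpha$ is $\alpha$ with its $\varepsilon$ entries deleted. $\mathcal C_\varepsilon$ is the set of $\tilde{\mathbb N}$-compositions with first entry $\varepsilon$, $\mathcal C_N$ the set of all others (including the empty one). *)

theory Defs
  imports Main
begin

text \<open>Entries of \<open>\<tilde>N\<close>-compositions: \<open>Eps\<close> is \<open>\<epsilon>\<close>, \<open>Num n\<close> is the integer n
  (only n \<ge> 1 is allowed in a composition).\<close>
datatype ntilde = Eps | Num nat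

type_synonym wcomp = "ntilde list"
type_synonym comp = "nat list"

definition valid_wcomp :: "wcomp \<Rightarrow> bool" where
  "valid_wcomp \<alpha> \<longleftrightarrow> (\<forall>x\<in>set \<alpha>. x = Eps \<or> (\<exists>n. x = Num n \<and> n \<ge> 1))"

definition valid_comp :: "comp \<Rightarrow> bool" where
  "valid_comp \<alpha> \<longleftrightarrow> (\<forall>n\<in>set \<alpha>. n \<ge> 1)"

text \<open>Elements of the free module with basis indexed by \<open>'b\<close> are coefficient
  functions with finite support.\<close>
definition supp :: "('b \<Rightarrow> 'k::zero) \<Rightarrow> 'b set" where
  "supp f = {x. f x \<noteq> 0}"

text \<open>Linear extension of a map given on basis elements (image of basis element x
  is the coefficient function T x).\<close>
definition lin :: "('b \<Rightarrow> 'c \<Rightarrow> 'k::comm_semiring_1) \<Rightarrow> ('b \<Rightarrow> 'k) \<Rightarrow> ('c \<Rightarrow> 'k)" where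
  "lin T f = (\<lambda>y. \<Sum>x\<in>supp f. f x * T x y)"

definition WCQSym :: "(wcomp \<Rightarrow> 'k::zero) set" where
  "WCQSym = {f. finite (supp f) \<and> (\<forall>\<alpha>\<in>supp f. valid_wcomp \<alpha>)}"

text \<open>Coproduct on basis: \<open>M_\<alpha> \<mapsto> \<Sum>_i M_{\<alpha>_1..\<alpha>_i} \<otimes> M_{\<alpha>_{i+1}..\<alpha>_k}\<close>;
  the tensor square of a free module is free on pairs of basis elements.\<close>
definition DeltaW_basis :: "wcomp \<Rightarrow> (wcomp \<times> wcomp) \<Rightarrow> 'k::comm_semiring_1" where
  "DeltaW_basis \<alpha> = (\<lambda>(a, b). \<Sum>i\<in>{0..length \<alpha>}.
       (if a = take i \<alpha> \<and> b = drop i \<alpha> then 1 else 0))"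

definition DeltaN_basis :: "comp \<Rightarrow> (comp \<times> comp) \<Rightarrow> 'k::comm_semiring_1" where
  "DeltaN_basis \<alpha> = (\<lambda>(a, b). \<Sum>i\<in>{0..length \<alpha>}.
       (if a = take i \<alpha> \<and> b = drop i \<alpha> then 1 else 0))"

definition DeltaW :: "(wcomp \<Rightarrow> 'k::comm_semiring_1) \<Rightarrow> (wcomp \<times> wcomp \<Rightarrow> 'k)" where
  "DeltaW = lin DeltaW_basis"

definition DeltaN :: "(comp \<Rightarrow> 'k::comm_semiring_1) \<Rightarrow> (comp \<times> comp \<Rightarrow> 'k)" where
  "DeltaN = lin DeltaN_basis"

definition epsW :: "(wcomp \<Rightarrow> 'k::comm_semiring_1) \<Rightarrow> 'k" where
  "epsW f = (\<Sum>\<alpha>\<in>supp f. f \<alpha> * (if \<alpha> = [] then 1 else 0))"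

definition epsN :: "(comp \<Rightarrow> 'k::comm_semiring_1) \<Rightarrow> 'k" where
  "epsN f = (\<Sum>\<alpha>\<in>supp f. f \<alpha> * (if \<alpha> = [] then 1 else 0))"

definition tensor_map ::
  "('a \<Rightarrow> 'c \<Rightarrow> 'k::comm_semiring_1) \<Rightarrow> ('b \<Rightarrow> 'd \<Rightarrow> 'k) \<Rightarrow> ('a \<times> 'b \<Rightarrow> 'k) \<Rightarrow> ('c \<times> 'd \<Rightarrow> 'k)" where
  "tensor_map S T = lin (\<lambda>(a, b) (c, d). S a c * T b d)"

definition ell_eps :: "wcomp \<Rightarrow> nat" where
  "ell_eps \<alpha> = length (filter (\<lambda>x. x = Eps) \<alpha>)"

fun entry_val :: "ntilde \<Rightarrow> nat" where
  "entry_val Eps = 0" | "entry_val (Num n) = n"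

definition bar :: "wcomp \<Rightarrow> comp" where
  "bar \<alpha> = map entry_val (filter (\<lambda>x. x \<noteq> Eps) \<alpha>)"

definition in_C_eps :: "wcomp \<Rightarrow> bool" where
  "in_C_eps \<alpha> \<longleftrightarrow> \<alpha> \<noteq> [] \<and> hd \<alpha> = Eps"

definition phi_basis :: "wcomp \<Rightarrow> comp \<Rightarrow> 'k::comm_ring_1" where
  "phi_basis \<alpha> = (\<lambda>\<beta>. if in_C_eps \<alpha> then 0
       else (if \<beta> = bar \<alpha> then (-1) ^ ell_eps \<alpha> else 0))"

definition phi :: "(wcomp \<Rightarrow> 'k::comm_ring_1) \<Rightarrow> (comp \<Rightarrow> 'k)" where
  "phi = lin phi_basis"

end

theory Submission
  imports Defs
begin

lemma sum_supp_ext: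
  assumes "finite A" "supp g \<subseteq> A"
  shows "(\<Sum>z\<in>supp g. g z * h z) = (\<Sum>z\<in>A. (g z :: 'k::comm_semiring_1) * h z)"
  by (rule sum.mono_neutral_left) (use assms in \<open>auto simp: supp_def\<close>)

lemma lin_eq:
  assumes "finite A" "supp f \<subseteq> A"
  shows "lin T f y = (\<Sum>x\<in>A. f x * T x y)"
  unfolding lin_def by (rule sum_supp_ext[OF assms])

lemma supp_lin: "supp (lin T f) \<subseteq> (\<Union>x\<in>supp f. supp (T x))"
proof
  fix y assume "y \<in> supp (lin T f)"
  hence "(\<Sum>x\<in>supp f. f x * T x y) \<noteq> 0" by (simp add: supp_def lin_def)
  then obtain x where "x \<in> supp f" "f x * T x y \<noteq> 0" by (meson sum.neutral)
  thus "y \<in> (\<Union>x\<in>supp f. supp (T x))" by (auto simp: supp_def)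
qed

lemma lin_lin:
  assumes fin: "finite (supp f)" and finT: "\<And>x. finite (supp (T x))"
  shows "lin U (lin T f) y = (\<Sum>x\<in>supp f. f x * (\<Sum>z\<in>supp (T x). T x z * U z y))"
proof -
  define B where "B = (\<Union>x\<in>supp f. supp (T x))"
  have finB: "finite B" using fin finT by (simp add: B_def)
  have "lin U (lin T f) y = (\<Sum>z\<in>B. lin T f z * U z y)"
    using supp_lin[of T f] by (intro lin_eq[OF finB]) (auto simp: B_def)
  also have "\<dots> = (\<Sum>z\<in>B. \<Sum>x\<in>supp f. f x * (T x z * U z y))"
    by (simp add: lin_def sum_distrib_right mult.assoc)
  also have "\<dots> = (\<Sum>x\<in>supp f. f x * (\<Sum>z\<in>B. T x z * U z y))"
    by (subst sum.swap) (simp add: sum_distrib_left)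
  also have "\<dots> = (\<Sum>x\<in>supp f. f x * (\<Sum>z\<in>supp (T x). T x z * U z y))"
  proof (rule sum.cong[OF refl])
    fix x assume "x \<in> supp f"
    hence "supp (T x) \<subseteq> B" by (auto simp: B_def)
    thus "f x * (\<Sum>z\<in>B. T x z * U z y) = f x * (\<Sum>z\<in>supp (T x). T x z * U z y)"
      using sum_supp_ext[OF finB, of "T x" "\<lambda>z. U z y"] by simp
  qed
  finally show ?thesis .
qed

lemma split_sum:
  assumes "finite A" "(\<lambda>i. (take i \<alpha>, drop i \<alpha>)) ` {0..length \<alpha>} \<subseteq> A"
  shows "(\<Sum>z\<in>A. (case z of (a, b) \<Rightarrow> \<Sum>i\<in>{0..length \<alpha>}.
       (if a = take i \<alpha> \<and> b = drop i \<alpha> then 1 else 0)) * (g z :: 'k::comm_semiring_1))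
    = (\<Sum>i\<in>{0..length \<alpha>}. g (take i \<alpha>, drop i \<alpha>))"
proof -
  have "(\<Sum>z\<in>A. (case z of (a, b) \<Rightarrow> \<Sum>i\<in>{0..length \<alpha>}.
       (if a = take i \<alpha> \<and> b = drop i \<alpha> then 1 else 0)) * g z)
     = (\<Sum>z\<in>A. \<Sum>i\<in>{0..length \<alpha>}. (if z = (take i \<alpha>, drop i \<alpha>) then g z else 0))"
    by (rule sum.cong[OF refl]) (auto simp: sum_distrib_right split: prod.splits intro!: sum.cong)
  also have "\<dots> = (\<Sum>i\<in>{0..length \<alpha>}. \<Sum>z\<in>A. (if z = (take i \<alpha>, drop i \<alpha>) then g z else 0))"
    by (rule sum.swap)
  also have "\<dots> = (\<Sum>i\<in>{0..length \<alpha>}. g (take i \<alpha>, drop i \<alpha>))"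
    using assms by (intro sum.cong[OF refl]) (auto simp: sum.delta' image_subset_iff)
  finally show ?thesis .
qed


lemma DN_Nil: "DeltaN_basis \<beta> ([], d) = (if d = \<beta> then 1 else 0)"
proof (cases \<beta>)
  case Nil thus ?thesis by (simp add: DeltaN_basis_def)
next
  case (Cons b bs)
  thus ?thesis unfolding DeltaN_basis_def
    by (simp only: prod.case length_Cons sum.atLeast0_atMost_Suc_shift) simp
qed

lemma DN_Cons: "DeltaN_basis (n # \<beta>) (h # t, d) = (if h = n then DeltaN_basis \<beta> (t, d) else 0)"
  unfolding DeltaN_basis_def
  by (simp only: prod.case length_Cons sum.atLeast0_atMost_Suc_shift) auto

definition psi :: "wcomp \<Rightarrow> comp \<Rightarrow> 'k::comm_ring_1" where
  "psi \<alpha> c = (if c = bar \<alpha> then (-1) ^ ell_eps \<alpha> else 0)"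

lemma bar_simps[simp]: "bar [] = []" "bar (Eps # \<alpha>) = bar \<alpha>" "bar (Num n # \<alpha>) = n # bar \<alpha>"
  by (auto simp: bar_def)

lemma ell_simps[simp]: "ell_eps [] = 0" "ell_eps (Eps # \<alpha>) = Suc (ell_eps \<alpha>)"
  "ell_eps (Num n # \<alpha>) = ell_eps \<alpha>"
  by (auto simp: ell_eps_def)

lemma phi_basis_simps: "phi_basis (Eps # \<alpha>) = (\<lambda>_. 0)"
  "phi_basis [] = psi []" "phi_basis (Num n # \<alpha>) = psi (Num n # \<alpha>)"
  by (auto simp: phi_basis_def psi_def in_C_eps_def fun_eq_iff)

lemma psi_Eps: "psi (ntilde.Eps # \<beta>) c = - psi \<beta> c"
  by (simp add: psi_def)

lemma psi_Num: "psi (Num n # \<beta>) c = (case c of [] \<Rightarrow> 0 | h # t \<Rightarrow> if h = n then psi \<beta> t else 0)"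
  by (simp add: psi_def split: list.split)

lemma psi_Nil: "psi [] c = (if c = [] then 1 else 0)"
  by (simp add: psi_def)

lemma key:
  "(\<Sum>i\<in>{0..length \<alpha>}. psi (take i \<alpha>) c * phi_basis (drop i \<alpha>) d)
     = ((-1) ^ ell_eps \<alpha> * DeltaN_basis (bar \<alpha>) (c, d) :: 'k::comm_ring_1)"
proof (induction \<alpha> arbitrary: c)
  case Nil
  thus ?case by (simp add: phi_basis_simps psi_def DeltaN_basis_def)
next
  case (Cons x \<alpha>)
  show ?case
  proof (cases x)
    case Eps
    have "(\<Sum>i\<in>{0..length (x # \<alpha>)}. psi (take i (x # \<alpha>)) c * phi_basis (drop i (x # \<alpha>)) d :: 'k)
      = - (\<Sum>i\<in>{0..length \<alpha>}. psi (take i \<alpha>) c * phi_basis (drop i \<alpha>) d)"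
      by (simp only: length_Cons sum.atLeast0_atMost_Suc_shift)
         (simp add: Eps phi_basis_simps sum_negf[symmetric] psi_Eps)
    thus ?thesis using Cons.IH by (simp add: Eps)
  next
    case (Num n)
    show ?thesis
    proof (cases c)
      case Nil
      thus ?thesis
        by (simp only: length_Cons sum.atLeast0_atMost_Suc_shift)
           (simp add: Num phi_basis_simps psi_def DN_Nil)
    next
      case (Cons h t)
      have "(\<Sum>i\<in>{0..length (x # \<alpha>)}. psi (take i (x # \<alpha>)) c * phi_basis (drop i (x # \<alpha>)) d :: 'k)
        = (if h = n then (\<Sum>i\<in>{0..length \<alpha>}. psi (take i \<alpha>) t * phi_basis (drop i \<alpha>) d) else 0)"
        by (simp only: length_Cons sum.atLeast0_atMost_Suc_shift)
           (simp add: Num Cons phi_basis_simps psi_Num psi_Nil)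
      thus ?thesis using Cons.IH[of t] by (simp add: Num Cons DN_Cons)
    qed
  qed
qed

lemma key_phi:
  "(\<Sum>i\<in>{0..length \<alpha>}. phi_basis (take i \<alpha>) c * phi_basis (drop i \<alpha>) d)
     = (phi_basis \<alpha> (bar \<alpha>) * DeltaN_basis (bar \<alpha>) (c, d) :: 'k::comm_ring_1)"
proof (cases \<alpha>)
  case Nil
  thus ?thesis using key[of "[]" c d] by (simp add: phi_basis_simps psi_def)
next
  case (Cons x \<beta>)
  show ?thesis
  proof (cases x)
    case Eps
    thus ?thesis using Cons
      by (simp only: length_Cons sum.atLeast0_atMost_Suc_shift)
         (simp add: phi_basis_simps)
  next
    case (Num n)
    have "(phi_basis (take i \<alpha>) :: comp \<Rightarrow> 'k) = psi (take i \<alpha>)" for i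
      using Cons Num by (cases i) (auto simp: phi_basis_simps)
    hence "(\<Sum>i\<in>{0..length \<alpha>}. phi_basis (take i \<alpha>) c * phi_basis (drop i \<alpha>) d)
      = (\<Sum>i\<in>{0..length \<alpha>}. psi (take i \<alpha>) c * phi_basis (drop i \<alpha>) d :: 'k)" by simp
    also have "\<dots> = (-1) ^ ell_eps \<alpha> * DeltaN_basis (bar \<alpha>) (c, d)" by (rule key)
    also have "(-1) ^ ell_eps \<alpha> = (phi_basis \<alpha> (bar \<alpha>) :: 'k)"
      using Cons Num by (simp add: phi_basis_simps psi_def)
    finally show ?thesis .
  qed
qed

lemma supp_phi_basis: "supp (phi_basis \<alpha>) \<subseteq> {bar \<alpha>}"
  by (auto simp: supp_def phi_basis_def)

lemma supp_DW: "supp (DeltaW_basis \<alpha> :: _ \<Rightarrow> 'k::comm_semiring_1) \<subseteq> (\<lambda>i. (take i \<alpha>, drop i \<alpha>)) ` {0..length \<alpha>}"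
proof
  fix z assume zs: "z \<in> supp (DeltaW_basis \<alpha> :: _ \<Rightarrow> 'k)"
  obtain a b where z: "z = (a, b)" by (cases z)
  have ne: "(\<Sum>i\<in>{0..length \<alpha>}. (if a = take i \<alpha> \<and> b = drop i \<alpha> then 1 else 0) :: 'k) \<noteq> 0"
    using zs unfolding z supp_def DeltaW_basis_def by simp
  have "\<exists>i\<in>{0..length \<alpha>}. a = take i \<alpha> \<and> b = drop i \<alpha>"
  proof (rule ccontr)
    assume "\<not> ?thesis"
    hence "\<forall>i\<in>{0..length \<alpha>}. (if a = take i \<alpha> \<and> b = drop i \<alpha> then 1 else 0 :: 'k) = 0"
      by simp
    hence "(\<Sum>i\<in>{0..length \<alpha>}. (if a = take i \<alpha> \<and> b = drop i \<alpha> then 1 else 0) :: 'k) = 0"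
      by (rule sum.neutral)
    with ne show False by contradiction
  qed
  then obtain i where i: "i \<in> {0..length \<alpha>}" "a = take i \<alpha> \<and> b = drop i \<alpha>" by blast
  thus "z \<in> (\<lambda>i. (take i \<alpha>, drop i \<alpha>)) ` {0..length \<alpha>}" using z i by blast
qed

lemma phi_basis_Nil_arg: "phi_basis \<alpha> [] = (if \<alpha> = [] then 1 else 0)"
proof (cases \<alpha>)
  case (Cons x \<beta>) thus ?thesis
    by (cases x) (auto simp: phi_basis_def in_C_eps_def)
qed (simp add: phi_basis_def in_C_eps_def)

lemma split_sum':
  assumes "finite A" "(\<lambda>i. (take i \<alpha>, drop i \<alpha>)) ` {0..length \<alpha>} \<subseteq> A"
  shows "(\<Sum>z\<in>A. DeltaW_basis \<alpha> z * (g z :: 'k::comm_semiring_1))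
    = (\<Sum>i\<in>{0..length \<alpha>}. g (take i \<alpha>, drop i \<alpha>))"
  unfolding DeltaW_basis_def by (rule split_sum[OF assms])

lemma delta_supp:
  assumes "finite (supp g)"
  shows "(\<Sum>x\<in>supp g. g x * (if x = a then 1 else 0)) = (g a :: 'k::comm_semiring_1)"
proof -
  have "(\<Sum>x\<in>supp g. g x * (if x = a then 1 else 0)) = (\<Sum>x\<in>supp g. if x = a then g x else 0)"
    by (rule sum.cong[OF refl]) auto
  also have "\<dots> = (if a \<in> supp g then g a else 0)" using assms by (simp add: sum.delta')
  also have "\<dots> = g a" by (simp add: supp_def)
  finally show ?thesis .
qed

theorem lemma3p7:
  fixes f :: "wcomp \<Rightarrow> 'k::comm_ring_1"
  assumes rat: "\<forall>n::nat. n \<noteq> 0 \<longrightarrow> (\<exists>y::'k. of_nat n * y = 1)"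
    and f: "f \<in> WCQSym"
  shows "DeltaN (phi f) = tensor_map phi_basis phi_basis (DeltaW f)
         \<and> epsN (phi f) = epsW f"
proof
  have fin: "finite (supp f)" using f by (simp add: WCQSym_def)
  have finP: "finite (supp (phi_basis \<alpha>))" for \<alpha>
    using supp_phi_basis finite_subset by (metis finite.emptyI finite.insertI)
  have finD: "finite (supp (DeltaW_basis \<alpha>))" for \<alpha>
    by (rule finite_subset[OF supp_DW]) simp
  show "DeltaN (phi f) = tensor_map phi_basis phi_basis (DeltaW f)"
  proof
    fix p :: "comp \<times> comp"
    obtain c d where p: "p = (c, d)" by (cases p)
    have L: "DeltaN (phi f) p = (\<Sum>\<alpha>\<in>supp f. f \<alpha> * (phi_basis \<alpha> (bar \<alpha>) * DeltaN_basis (bar \<alpha>) p))"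
      unfolding DeltaN_def phi_def
      by (simp add: lin_lin[OF fin finP] sum_supp_ext[OF _ supp_phi_basis])
    have R: "tensor_map phi_basis phi_basis (DeltaW f) p
        = (\<Sum>\<alpha>\<in>supp f. f \<alpha> * (\<Sum>i\<in>{0..length \<alpha>}. phi_basis (take i \<alpha>) c * phi_basis (drop i \<alpha>) d))"
      unfolding tensor_map_def DeltaW_def
      apply (simp add: lin_lin[OF fin finD] sum_supp_ext[OF _ supp_DW])
      apply (rule sum.cong[OF refl])
      apply (subst split_sum')
      by (auto simp: p)
    show "DeltaN (phi f) p = tensor_map phi_basis phi_basis (DeltaW f) p"
      unfolding L R by (simp add: key_phi p)
  qed
next
  have fin: "finite (supp f)" using f by (simp add: WCQSym_def)
  have "supp (phi f) \<subseteq> (\<Union>x\<in>supp f. supp (phi_basis x :: comp \<Rightarrow> 'k))"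
    unfolding phi_def by (rule supp_lin)
  hence finp: "finite (supp (phi f))"
    by (rule finite_subset) (intro finite_UN_I fin, rule finite_subset[OF supp_phi_basis], simp)
  have "epsN (phi f) = phi f []"
    unfolding epsN_def by (rule delta_supp[OF finp])
  also have "phi f [] = f []"
    unfolding phi_def lin_def phi_basis_Nil_arg by (rule delta_supp[OF fin])
  also have "f [] = epsW f"
    unfolding epsW_def by (rule delta_supp[OF fin, symmetric])
  finally show "epsN (phi f) = epsW f" .
qed

end
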